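(* Let $\nabla$ be an affine connection, $h$ a non-degenerate symmetric $(0,2)$-tensor field and $J$ an $h$-symmetric $(1,1)$-tensor field on a smooth manifold $M$, and let $\hat J$ be the endomorphism of $TM\oplus T^*M$ given by $\hat J(X+\eta)=-X+2J(h^{-1}(\eta))+\eta$. Then the following are equivalent: (i) $\hat\nabla\hat J=0$; (ii) $\nabla J=0$; (iii) $\hat\nabla^*\hat J=0$.
   Context: $h$ is viewed as the isomorphism $TM\to T^*M$, $X\mapsto h(X,\cdot)$, with inverse $h^{-1}$; $J$ is $h$-symmetric if $h(JX,Y)=h(X,JY)$. The generalized connections are $\hat\nabla_{X+\eta}(Y+\beta):=\nabla_XY+h(\nabla_X(h^{-1}(\beta)))$ and $\hat\nabla^*_{X+\eta}(Y+\beta):=h^{-1}(\nabla_X(h(Y)))+\nabla_X\beta$ (the dual of $\hat\nabla$ w.r.t. $\check h(X+\eta,Y+\beta)=h(X,Y)+h(h^{-1}\eta,h^{-1}\beta)$), for vector fields $X,Y$ and 1-forms $\eta,\beta$; $(D_\sigma\hat J)\tau:=D_\sigma(\hat J\tau)-\hat J D_\sigma\tau$. *)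

theory Defs
  imports Main "HOL-Analysis.Analysis"
begin

text \<open>Algebraic (Koszul-style) model of the tensor calculus on a smooth manifold M.
  'r plays the role of the ring C-infinity(M) of smooth real functions (a commutative
  real algebra), 'v the C-infinity(M)-module of vector fields with scalar multiplication sm,
  and act X f the derivative X(f) of a function along a vector field.
  1-forms are the C-infinity(M)-linear maps from vector fields to functions.\<close>

definition vf_structure :: "('r::{comm_ring_1,real_algebra_1} \<Rightarrow> 'v::ab_group_add \<Rightarrow> 'v)
     \<Rightarrow> ('v \<Rightarrow> 'r \<Rightarrow> 'r) \<Rightarrow> bool" where
  "vf_structure sm act \<longleftrightarrow>
     module sm \<and>
     (\<forall>X f g. act X (f * g) = act X f * g + f * act X g) \<and>
     (\<forall>X f g. act X (f + g) = act X f + act X g) \<and>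
     (\<forall>X c. act X (of_real c) = 0) \<and>
     (\<forall>X Y f. act (X + Y) f = act X f + act Y f) \<and>
     (\<forall>g X f. act (sm g X) f = g * act X f)"

definition one_forms :: "('r::comm_ring_1 \<Rightarrow> 'v::ab_group_add \<Rightarrow> 'v) \<Rightarrow> ('v \<Rightarrow> 'r) set" where
  "one_forms sm = {\<eta>. (\<forall>X Y. \<eta> (X + Y) = \<eta> X + \<eta> Y) \<and> (\<forall>f X. \<eta> (sm f X) = f * \<eta> X)}"

definition tensor11 :: "('r::comm_ring_1 \<Rightarrow> 'v::ab_group_add \<Rightarrow> 'v) \<Rightarrow> ('v \<Rightarrow> 'v) \<Rightarrow> bool" where
  "tensor11 sm J \<longleftrightarrow> (\<forall>X Y. J (X + Y) = J X + J Y) \<and> (\<forall>f X. J (sm f X) = sm f (J X))"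

definition affine_connection :: "('r::comm_ring_1 \<Rightarrow> 'v::ab_group_add \<Rightarrow> 'v)
     \<Rightarrow> ('v \<Rightarrow> 'r \<Rightarrow> 'r) \<Rightarrow> ('v \<Rightarrow> 'v \<Rightarrow> 'v) \<Rightarrow> bool" where
  "affine_connection sm act nabla \<longleftrightarrow>
     (\<forall>X1 X2 Y. nabla (X1 + X2) Y = nabla X1 Y + nabla X2 Y) \<and>
     (\<forall>f X Y. nabla (sm f X) Y = sm f (nabla X Y)) \<and>
     (\<forall>X Y1 Y2. nabla X (Y1 + Y2) = nabla X Y1 + nabla X Y2) \<and>
     (\<forall>X f Y. nabla X (sm f Y) = sm (act X f) Y + sm f (nabla X Y))"

definition nabla_form :: "('v \<Rightarrow> 'r::comm_ring_1 \<Rightarrow> 'r) \<Rightarrow> ('v \<Rightarrow> 'v \<Rightarrow> 'v) \<Rightarrow> 'v \<Rightarrow> ('v \<Rightarrow> 'r) \<Rightarrow> ('v \<Rightarrow> 'r)" where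
  "nabla_form act nabla X \<eta> = (\<lambda>Y. act X (\<eta> Y) - \<eta> (nabla X Y))"

definition flat :: "('v \<Rightarrow> 'v \<Rightarrow> 'r) \<Rightarrow> 'v \<Rightarrow> ('v \<Rightarrow> 'r)" where
  "flat h X = (\<lambda>Y. h X Y)"

definition sharp :: "('v \<Rightarrow> 'v \<Rightarrow> 'r) \<Rightarrow> ('v \<Rightarrow> 'r) \<Rightarrow> 'v" where
  "sharp h = inv (flat h)"

definition nondeg_sym_tensor :: "('r::comm_ring_1 \<Rightarrow> 'v::ab_group_add \<Rightarrow> 'v) \<Rightarrow> ('v \<Rightarrow> 'v \<Rightarrow> 'r) \<Rightarrow> bool" where
  "nondeg_sym_tensor sm h \<longleftrightarrow>
     (\<forall>X. h X \<in> one_forms sm) \<and>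
     (\<forall>X Y. h X Y = h Y X) \<and>
     bij_betw (flat h) UNIV (one_forms sm)"

definition h_symmetric :: "('v \<Rightarrow> 'v \<Rightarrow> 'r) \<Rightarrow> ('v \<Rightarrow> 'v) \<Rightarrow> bool" where
  "h_symmetric h J \<longleftrightarrow> (\<forall>X Y. h (J X) Y = h X (J Y))"

text \<open>Sections of TM + T*M are pairs (X, eta) standing for X + eta.\<close>
definition gen_sections :: "('r::comm_ring_1 \<Rightarrow> 'v::ab_group_add \<Rightarrow> 'v) \<Rightarrow> ('v \<times> ('v \<Rightarrow> 'r)) set" where
  "gen_sections sm = UNIV \<times> one_forms sm"

definition Jhat :: "('r::comm_ring_1 \<Rightarrow> 'v::ab_group_add \<Rightarrow> 'v) \<Rightarrow> ('v \<Rightarrow> 'v \<Rightarrow> 'r) \<Rightarrow> ('v \<Rightarrow> 'v)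
     \<Rightarrow> 'v \<times> ('v \<Rightarrow> 'r) \<Rightarrow> 'v \<times> ('v \<Rightarrow> 'r)" where
  "Jhat sm h J \<sigma> = (- fst \<sigma> + sm 2 (J (sharp h (snd \<sigma>))), snd \<sigma>)"

definition nabla_hat :: "('v \<Rightarrow> 'v \<Rightarrow> 'r) \<Rightarrow> ('v \<Rightarrow> 'v \<Rightarrow> 'v)
     \<Rightarrow> 'v \<times> ('v \<Rightarrow> 'r) \<Rightarrow> 'v \<times> ('v \<Rightarrow> 'r) \<Rightarrow> 'v \<times> ('v \<Rightarrow> 'r)" where
  "nabla_hat h nabla \<sigma> \<tau> =
     (nabla (fst \<sigma>) (fst \<tau>), flat h (nabla (fst \<sigma>) (sharp h (snd \<tau>))))"

definition nabla_hat_star :: "('v \<Rightarrow> 'r::comm_ring_1 \<Rightarrow> 'r) \<Rightarrow> ('v \<Rightarrow> 'v \<Rightarrow> 'r) \<Rightarrow> ('v \<Rightarrow> 'v \<Rightarrow> 'v)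
     \<Rightarrow> 'v \<times> ('v \<Rightarrow> 'r) \<Rightarrow> 'v \<times> ('v \<Rightarrow> 'r) \<Rightarrow> 'v \<times> ('v \<Rightarrow> 'r)" where
  "nabla_hat_star act h nabla \<sigma> \<tau> =
     (sharp h (nabla_form act nabla (fst \<sigma>) (flat h (fst \<tau>))),
      nabla_form act nabla (fst \<sigma>) (snd \<tau>))"

definition gen_parallel :: "('r::comm_ring_1 \<Rightarrow> 'v::ab_group_add \<Rightarrow> 'v)
     \<Rightarrow> ('v \<times> ('v \<Rightarrow> 'r) \<Rightarrow> 'v \<times> ('v \<Rightarrow> 'r) \<Rightarrow> 'v \<times> ('v \<Rightarrow> 'r))
     \<Rightarrow> ('v \<times> ('v \<Rightarrow> 'r) \<Rightarrow> 'v \<times> ('v \<Rightarrow> 'r)) \<Rightarrow> bool" where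
  "gen_parallel sm D A \<longleftrightarrow>
     (\<forall>\<sigma>\<in>gen_sections sm. \<forall>\<tau>\<in>gen_sections sm. D \<sigma> (A \<tau>) = A (D \<sigma> \<tau>))"

definition parallel11 :: "('v::ab_group_add \<Rightarrow> 'v \<Rightarrow> 'v) \<Rightarrow> ('v \<Rightarrow> 'v) \<Rightarrow> bool" where
  "parallel11 nabla J \<longleftrightarrow> (\<forall>X Y. nabla X (J Y) = J (nabla X Y))"

end

theory Submission
  imports Defs
begin

locale P34 =
  fixes sm :: "'r::{comm_ring_1,real_algebra_1} \<Rightarrow> 'v::ab_group_add \<Rightarrow> 'v"
    and act :: "'v \<Rightarrow> 'r \<Rightarrow> 'r"
    and nabla :: "'v \<Rightarrow> 'v \<Rightarrow> 'v"
    and h :: "'v \<Rightarrow> 'v \<Rightarrow> 'r"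
    and J :: "'v \<Rightarrow> 'v"
  assumes vf: "vf_structure sm act"
    and ac: "affine_connection sm act nabla"
    and nd: "nondeg_sym_tensor sm h"
    and tJ: "tensor11 sm J"
    and hs: "h_symmetric h J"
begin

interpretation M: module sm using vf unfolding vf_structure_def by blast

lemma act_mult: "act X (f * g) = act X f * g + f * act X g"
  using vf unfolding vf_structure_def by blast
lemma act_add: "act X (f + g) = act X f + act X g"
  using vf unfolding vf_structure_def by blast
lemma act_const: "act X (of_real c) = 0"
  using vf unfolding vf_structure_def by blast
lemma act_2: "act X 2 = 0"
  using act_const[of X 2] by simp
lemma act_minus: "act X (- f) = - act X f"
proof -
  have "act X (f + - f) = act X f + act X (- f)" by (rule act_add)
  moreover have "act X (f + - f) = 0" using act_const[of X 0] by simp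
  ultimately show ?thesis by (metis add.commute eq_neg_iff_add_eq_0)
qed
lemma act_diff: "act X (f - g) = act X f - act X g"
  using act_add[of X f "- g"] act_minus[of X g] by simp
lemma act_2mult: "act X (2 * f) = 2 * act X f"
  by (simp add: act_mult act_2)

lemma hX_form: "h X \<in> one_forms sm" using nd unfolding nondeg_sym_tensor_def by blast
lemma h_sym: "h X Y = h Y X" using nd unfolding nondeg_sym_tensor_def by blast
lemma flat_bij: "bij_betw (flat h) UNIV (one_forms sm)" using nd unfolding nondeg_sym_tensor_def by blast

lemma h_add2: "h X (Y + Z) = h X Y + h X Z" using hX_form[of X] unfolding one_forms_def by blast
lemma h_sm2: "h X (sm f Y) = f * h X Y" using hX_form[of X] unfolding one_forms_def by blast
lemma h_add1: "h (Y + Z) X = h Y X + h Z X" using h_add2 h_sym by metis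
lemma h_sm1: "h (sm f Y) X = f * h Y X" using h_sm2 h_sym by metis
lemma h_neg1: "h (- Y) X = - h Y X"
proof -
  have "h (Y + - Y) X = h Y X + h (- Y) X" by (rule h_add1)
  moreover have "h (Y + - Y) X = 0" using h_sm1[of 0 Y X] by simp
  ultimately show ?thesis by (metis add.commute eq_neg_iff_add_eq_0)
qed

lemma h_diff1: "h (Y - Z) X = h Y X - h Z X"
  using h_add1[of Y "- Z" X] h_neg1[of Z X] by simp

lemma flat_inj: "flat h A = flat h B \<Longrightarrow> A = B"
  using flat_bij unfolding bij_betw_def inj_on_def by blast
lemma sharp_flat[simp]: "sharp h (flat h X) = X"
  unfolding sharp_def using flat_bij by (simp add: bij_betw_def inv_f_f)
lemma flat_sharp: "\<eta> \<in> one_forms sm \<Longrightarrow> flat h (sharp h \<eta>) = \<eta>"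
  unfolding sharp_def using flat_bij by (metis bij_betw_def f_inv_into_f)
lemma sharp_surj: "\<exists>\<beta>\<in>one_forms sm. sharp h \<beta> = Y"
  using hX_form[of Y] sharp_flat[of Y] unfolding flat_def by (metis)

lemma tJ_add: "J (X + Y) = J X + J Y" using tJ unfolding tensor11_def by blast
lemma hsJ: "h (J X) Y = h X (J Y)" using hs unfolding h_symmetric_def by blast

lemma n_add2: "nabla X (Y1 + Y2) = nabla X Y1 + nabla X Y2"
  using ac unfolding affine_connection_def by blast
lemma n_sm2: "nabla X (sm f Y) = sm (act X f) Y + sm f (nabla X Y)"
  using ac unfolding affine_connection_def by blast
lemma n_neg: "nabla X (- Y) = - nabla X Y"
proof -
  have "nabla X (Y + - Y) = nabla X Y + nabla X (- Y)" by (rule n_add2)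
  moreover have "nabla X (Y + - Y) = 0" using n_sm2[of X 0 Y] act_const[of X 0] by simp
  ultimately show ?thesis by (metis add.commute eq_neg_iff_add_eq_0)
qed
lemma n_diff: "nabla X (Y - Z) = nabla X Y - nabla X Z"
  using n_add2[of X Y "- Z"] n_neg[of X Z] by simp
lemma n_2: "nabla X (sm 2 Y) = sm 2 (nabla X Y)"
  by (simp add: n_sm2 act_2)

lemma half2: "of_real (1/2) * (2::'r) = 1"
proof -
  have "of_real (1/2) * (2::'r) = of_real (1/2 * 2)" by (simp only: of_real_mult of_real_numeral)
  also have "\<dots> = 1" by simp
  finally show ?thesis .
qed

lemma cancel2v: "sm 2 a = sm 2 b \<Longrightarrow> a = b"
proof -
  assume "sm 2 a = sm 2 b"
  hence "sm (of_real (1/2)) (sm 2 a) = sm (of_real (1/2)) (sm 2 b)" by simp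
  moreover have "of_real (1/2) * (2::'r) = 1" by (rule half2)
  ultimately show "a = b" by simp
qed
lemma cancel2r: "(2::'r) * a = 2 * b \<Longrightarrow> a = b"
proof -
  assume "(2::'r) * a = 2 * b"
  hence "of_real (1/2) * (2 * a) = of_real (1/2) * (2 * b)" by simp
  moreover have "of_real (1/2) * (2::'r) = 1" by (rule half2)
  ultimately show "a = b" by (simp add: mult.assoc[symmetric])
qed

lemma nf_form: "\<eta> \<in> one_forms sm \<Longrightarrow> nabla_form act nabla X \<eta> \<in> one_forms sm"
  unfolding one_forms_def nabla_form_def
  by (auto simp: n_add2 n_sm2 act_add act_mult algebra_simps)

lemma partI_pt:
  assumes "\<beta> \<in> one_forms sm"
  shows "nabla_hat h nabla \<sigma> (Jhat sm h J (Y,\<beta>)) = Jhat sm h J (nabla_hat h nabla \<sigma> (Y,\<beta>))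
     \<longleftrightarrow> nabla (fst \<sigma>) (J (sharp h \<beta>)) = J (nabla (fst \<sigma>) (sharp h \<beta>))"
proof -
  have "nabla_hat h nabla \<sigma> (Jhat sm h J (Y,\<beta>)) =
     (- nabla (fst \<sigma>) Y + sm 2 (nabla (fst \<sigma>) (J (sharp h \<beta>))), flat h (nabla (fst \<sigma>) (sharp h \<beta>)))"
    unfolding nabla_hat_def Jhat_def by (simp only: fst_conv snd_conv n_add2 n_neg n_2)
  moreover have "Jhat sm h J (nabla_hat h nabla \<sigma> (Y,\<beta>)) =
     (- nabla (fst \<sigma>) Y + sm 2 (J (nabla (fst \<sigma>) (sharp h \<beta>))), flat h (nabla (fst \<sigma>) (sharp h \<beta>)))"
    unfolding nabla_hat_def Jhat_def by simp
  ultimately show ?thesis using cancel2v by auto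
qed

lemma partI: "gen_parallel sm (nabla_hat h nabla) (Jhat sm h J) \<longleftrightarrow> parallel11 nabla J"
proof
  assume g: "gen_parallel sm (nabla_hat h nabla) (Jhat sm h J)"
  show "parallel11 nabla J" unfolding parallel11_def
  proof (intro allI)
    fix X Y
    obtain \<beta> where b: "\<beta> \<in> one_forms sm" "sharp h \<beta> = Y" using sharp_surj by blast
    have "(X, \<beta>) \<in> gen_sections sm" "(Y, \<beta>) \<in> gen_sections sm" using b unfolding gen_sections_def by auto
    with g have "nabla_hat h nabla (X,\<beta>) (Jhat sm h J (Y,\<beta>)) = Jhat sm h J (nabla_hat h nabla (X,\<beta>) (Y,\<beta>))"
      unfolding gen_parallel_def by blast
    thus "nabla X (J Y) = J (nabla X Y)" using partI_pt[OF b(1), of "(X,\<beta>)" Y] b by simp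
  qed
next
  assume p: "parallel11 nabla J"
  show "gen_parallel sm (nabla_hat h nabla) (Jhat sm h J)" unfolding gen_parallel_def
  proof (intro ballI)
    fix \<sigma> \<tau> assume "\<sigma> \<in> gen_sections sm" "\<tau> \<in> gen_sections sm"
    then obtain Y \<beta> where t: "\<tau> = (Y,\<beta>)" "\<beta> \<in> one_forms sm" unfolding gen_sections_def by auto
    show "nabla_hat h nabla \<sigma> (Jhat sm h J \<tau>) = Jhat sm h J (nabla_hat h nabla \<sigma> \<tau>)"
      using partI_pt[OF t(2)] p unfolding t(1) parallel11_def by blast
  qed
qed

lemma h_sharp: "\<eta> \<in> one_forms sm \<Longrightarrow> h (sharp h \<eta>) Z = \<eta> Z"
  using flat_sharp[of \<eta>] unfolding flat_def by metis

lemma partIII_pt: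
  assumes "\<beta> \<in> one_forms sm"
  shows "nabla_hat_star act h nabla \<sigma> (Jhat sm h J (Y,\<beta>)) = Jhat sm h J (nabla_hat_star act h nabla \<sigma> (Y,\<beta>))
     \<longleftrightarrow> (\<forall>Z. h (sharp h \<beta>) (nabla (fst \<sigma>) (J Z)) = h (sharp h \<beta>) (J (nabla (fst \<sigma>) Z)))"
proof -
  define X where "X = fst \<sigma>"
  define W where "W = sharp h \<beta>"
  have bW: "\<beta> = flat h W" unfolding W_def using flat_sharp[OF assms] by (rule sym)
  define A where "A = nabla_form act nabla X (flat h (- Y + sm 2 (J W)))"
  define B where "B = flat h (- sharp h (nabla_form act nabla X (flat h Y)) + sm 2 (J (sharp h (nabla_form act nabla X \<beta>))))"
  have fl: "flat h V \<in> one_forms sm" for V using hX_form[of V] unfolding flat_def by simp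
  have Af: "A \<in> one_forms sm" unfolding A_def by (rule nf_form[OF fl])
  have fY: "flat h Y \<in> one_forms sm" by (rule fl)
  have e1: "nabla_hat_star act h nabla \<sigma> (Jhat sm h J (Y,\<beta>)) = Jhat sm h J (nabla_hat_star act h nabla \<sigma> (Y,\<beta>))
     \<longleftrightarrow> sharp h A = - sharp h (nabla_form act nabla X (flat h Y)) + sm 2 (J (sharp h (nabla_form act nabla X \<beta>)))"
    unfolding nabla_hat_star_def Jhat_def A_def X_def W_def by simp
  have e2: "\<dots> \<longleftrightarrow> A = B" (is "sharp h A = ?V \<longleftrightarrow> _")
  proof
    assume "sharp h A = ?V"
    hence "flat h (sharp h A) = flat h ?V" by simp
    thus "A = B" unfolding B_def flat_sharp[OF Af] .
  next
    assume "A = B"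
    thus "sharp h A = ?V" unfolding B_def by simp
  qed
  have AZ: "A Z = - act X (h Y Z) + 2 * act X (h W (J Z)) + h Y (nabla X Z) - 2 * h W (J (nabla X Z))" for Z
    unfolding A_def nabla_form_def flat_def
    by (simp add: h_add1 h_neg1 h_diff1 h_sm1 hsJ act_add act_minus act_diff act_2mult algebra_simps)
  have BZ: "B Z = - (act X (h Y Z) - h Y (nabla X Z)) + 2 * (act X (h W (J Z)) - h W (nabla X (J Z)))" for Z
  proof -
    have "B Z = - h (sharp h (nabla_form act nabla X (flat h Y))) Z + 2 * h (sharp h (nabla_form act nabla X \<beta>)) (J Z)"
      unfolding B_def flat_def by (simp add: h_add1 h_neg1 h_diff1 h_sm1 hsJ)
    also have "\<dots> = - nabla_form act nabla X (flat h Y) Z + 2 * nabla_form act nabla X \<beta> (J Z)"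
      using h_sharp nf_form fY assms by simp
    finally show ?thesis unfolding nabla_form_def bW flat_def .
  qed
  have e3: "A = B \<longleftrightarrow> (\<forall>Z. h W (nabla X (J Z)) = h W (J (nabla X Z)))"
  proof -
    have "A Z = B Z \<longleftrightarrow> 2 * h W (nabla X (J Z)) = 2 * h W (J (nabla X Z))" for Z
    proof -
      have d: "A Z - B Z = 2 * h W (nabla X (J Z)) - 2 * h W (J (nabla X Z))"
        unfolding AZ BZ by (simp add: algebra_simps)
      have "A Z = B Z \<longleftrightarrow> A Z - B Z = 0" by (rule eq_iff_diff_eq_0)
      also have "\<dots> \<longleftrightarrow> 2 * h W (nabla X (J Z)) - 2 * h W (J (nabla X Z)) = 0" using d by simp
      also have "\<dots> \<longleftrightarrow> 2 * h W (nabla X (J Z)) = 2 * h W (J (nabla X Z))" by (rule eq_iff_diff_eq_0[symmetric])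
      finally show ?thesis .
    qed
    hence "A Z = B Z \<longleftrightarrow> h W (nabla X (J Z)) = h W (J (nabla X Z))" for Z using cancel2r by auto
    thus ?thesis by (auto simp: fun_eq_iff)
  qed
  show ?thesis using e1 e2 e3 unfolding X_def W_def by simp
qed

lemma partIII: "parallel11 nabla J \<longleftrightarrow> gen_parallel sm (nabla_hat_star act h nabla) (Jhat sm h J)"
proof
  assume p: "parallel11 nabla J"
  show "gen_parallel sm (nabla_hat_star act h nabla) (Jhat sm h J)" unfolding gen_parallel_def
  proof (intro ballI)
    fix \<sigma> \<tau> assume "\<sigma> \<in> gen_sections sm" "\<tau> \<in> gen_sections sm"
    then obtain Y \<beta> where t: "\<tau> = (Y,\<beta>)" "\<beta> \<in> one_forms sm" unfolding gen_sections_def by auto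
    show "nabla_hat_star act h nabla \<sigma> (Jhat sm h J \<tau>) = Jhat sm h J (nabla_hat_star act h nabla \<sigma> \<tau>)"
      using partIII_pt[OF t(2)] p unfolding t(1) parallel11_def by simp
  qed
next
  assume g: "gen_parallel sm (nabla_hat_star act h nabla) (Jhat sm h J)"
  show "parallel11 nabla J" unfolding parallel11_def
  proof (intro allI)
    fix X Z
    have "h W (nabla X (J Z)) = h W (J (nabla X Z))" for W
    proof -
      obtain \<beta> where b: "\<beta> \<in> one_forms sm" "sharp h \<beta> = W" using sharp_surj by blast
      have "(X, \<beta>) \<in> gen_sections sm" "(W, \<beta>) \<in> gen_sections sm" using b unfolding gen_sections_def by auto
      with g have "nabla_hat_star act h nabla (X,\<beta>) (Jhat sm h J (W,\<beta>)) = Jhat sm h J (nabla_hat_star act h nabla (X,\<beta>) (W,\<beta>))"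
        unfolding gen_parallel_def by blast
      thus ?thesis using partIII_pt[OF b(1), of "(X,\<beta>)" W] b by simp
    qed
    hence "flat h (nabla X (J Z)) = flat h (J (nabla X Z))" unfolding flat_def using h_sym by (auto simp: fun_eq_iff)
    thus "nabla X (J Z) = J (nabla X Z)" by (rule flat_inj)
  qed
qed

end

theorem proposition3p4:
  fixes sm :: "'r::{comm_ring_1,real_algebra_1} \<Rightarrow> 'v::ab_group_add \<Rightarrow> 'v"
    and act :: "'v \<Rightarrow> 'r \<Rightarrow> 'r"
    and nabla :: "'v \<Rightarrow> 'v \<Rightarrow> 'v"
    and h :: "'v \<Rightarrow> 'v \<Rightarrow> 'r"
    and J :: "'v \<Rightarrow> 'v"
  assumes "vf_structure sm act"
    and "affine_connection sm act nabla"
    and "nondeg_sym_tensor sm h"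
    and "tensor11 sm J"
    and "h_symmetric h J"
  shows "(gen_parallel sm (nabla_hat h nabla) (Jhat sm h J) \<longleftrightarrow> parallel11 nabla J)
       \<and> (parallel11 nabla J \<longleftrightarrow> gen_parallel sm (nabla_hat_star act h nabla) (Jhat sm h J))"
proof -
  interpret P34 sm act nabla h J using assms by unfold_locales
  show ?thesis using partI partIII by blast
qed

end
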